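(* Assume Condition (C) and $\lambda/2<h<\lambda$. If $\eta\in\mathcal X$ contains either a cluster of pluses having a convex side of length $l_1<\frac{2J}{\lambda+h}$, or a cluster of minuses having a convex side of length $l_2<\frac{2J}{\lambda-h}$, then $V_\eta<2J$.
   Context: Let $\Lambda=\{1,\dots,L\}^2$, $\mathcal X=\{-1,0,+1\}^\Lambda$, $\partial^-\Lambda$ the sites of $\Lambda$ with a nearest neighbour outside $\Lambda$. Hamiltonian: $H(\eta)=\frac J2\sum_{i,j\in\Lambda,|i-j|=1}[\eta(i)-\eta(j)]^2+J\sum_{i\in\partial^-\Lambda}\sum_{j\notin\Lambda,|i-j|=1}\eta(i)^2-\lambda\sum_{i}\eta(i)^2-h\sum_i\eta(i)$. Condition (C): $J$ sufficiently large compared to $\lambda,h>0$; $L>(2J/(\lambda-h))^3$; none of $\tfrac{2J}{\lambda+h},\tfrac{2J}{\lambda-h},\tfrac{2J+\lambda-h}{\lambda+h},\tfrac{J+\lambda+h}{h}$ is an integer. Clusters of pluses (resp. minuses) of $\eta$ are the maximal connected components of the union of the closed unit squares centred at sites with spin $+1$ (resp. $-1$). The boundary of a cluster is a union of maximal straight segments (sides); the length of a side is the number of unit edges it contains. A corner of the boundary is convex if the interior angle of the cluster there is a right angle, concave otherwise; a side is convex if both its endpoints are convex corners. $V_\eta=\Phi(\eta,\{\zeta:H(\zeta)<H(\eta)\})-H(\eta)$, where $\Phi(\eta,A)$ is the minimum over paths (sequences of single-site changes) from $\eta$ to $A$ of the max of $H$ along the path. *)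

theory Defs
  imports Complex_Main
begin

type_synonym site = "int \<times> int"
type_synonym config = "site \<Rightarrow> int"

definition Lam :: "nat \<Rightarrow> site set" where
  "Lam L = {1..int L} \<times> {1..int L}"

definition nn :: "site \<Rightarrow> site \<Rightarrow> bool" where
  "nn i j \<longleftrightarrow> \<bar>fst i - fst j\<bar> + \<bar>snd i - snd j\<bar> = 1"

definition inner_boundary :: "nat \<Rightarrow> site set" where
  "inner_boundary L = {i \<in> Lam L. \<exists>j. nn i j \<and> j \<notin> Lam L}"

text \<open>State space: spins in {-1,0,1} on Lam L, and 0 outside (irrelevant padding).\<close>
definition Xsp :: "nat \<Rightarrow> config set" where
  "Xsp L = {\<eta>. (\<forall>i \<in> Lam L. \<eta> i \<in> {-1, 0, 1}) \<and> (\<forall>i. i \<notin> Lam L \<longrightarrow> \<eta> i = 0)}"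

definition Ham :: "real \<Rightarrow> real \<Rightarrow> real \<Rightarrow> nat \<Rightarrow> config \<Rightarrow> real" where
  "Ham J lam h L \<eta> =
     J / 2 * (\<Sum>(i, j) \<in> {(i, j). i \<in> Lam L \<and> j \<in> Lam L \<and> nn i j}. (real_of_int (\<eta> i - \<eta> j))\<^sup>2)
   + J * (\<Sum>i \<in> inner_boundary L. \<Sum>j \<in> {j. j \<notin> Lam L \<and> nn i j}. (real_of_int (\<eta> i))\<^sup>2)
   - lam * (\<Sum>i \<in> Lam L. (real_of_int (\<eta> i))\<^sup>2)
   - h * (\<Sum>i \<in> Lam L. real_of_int (\<eta> i))"

definition single_site :: "config \<Rightarrow> config \<Rightarrow> bool" where
  "single_site \<eta> \<zeta> \<longleftrightarrow> (\<exists>i. \<forall>j. j \<noteq> i \<longrightarrow> \<eta> j = \<zeta> j)"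

definition is_path :: "nat \<Rightarrow> config list \<Rightarrow> config \<Rightarrow> config set \<Rightarrow> bool" where
  "is_path L \<omega> \<eta> A \<longleftrightarrow> \<omega> \<noteq> [] \<and> hd \<omega> = \<eta> \<and> last \<omega> \<in> A \<and> set \<omega> \<subseteq> Xsp L
     \<and> (\<forall>k. Suc k < length \<omega> \<longrightarrow> single_site (\<omega> ! k) (\<omega> ! Suc k))"

definition Phi :: "real \<Rightarrow> real \<Rightarrow> real \<Rightarrow> nat \<Rightarrow> config \<Rightarrow> config set \<Rightarrow> real" where
  "Phi J lam h L \<eta> A = Inf {Max (Ham J lam h L ` set \<omega>) | \<omega>. is_path L \<omega> \<eta> A}"

definition Vstab :: "real \<Rightarrow> real \<Rightarrow> real \<Rightarrow> nat \<Rightarrow> config \<Rightarrow> real" where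
  "Vstab J lam h L \<eta> =
     Phi J lam h L \<eta> {\<zeta> \<in> Xsp L. Ham J lam h L \<zeta> < Ham J lam h L \<eta>} - Ham J lam h L \<eta>"

text \<open>Two closed unit squares centred at sites intersect iff the sites are
  at sup-distance at most 1 (they share an edge or a corner).  Clusters of spin s
  are the connected components of the union of the squares of the s-sites, i.e.
  the equivalence classes of this adjacency on the s-sites.\<close>
definition touch :: "site \<Rightarrow> site \<Rightarrow> bool" where
  "touch i j \<longleftrightarrow> i \<noteq> j \<and> \<bar>fst i - fst j\<bar> \<le> 1 \<and> \<bar>snd i - snd j\<bar> \<le> 1"

definition spin_sites :: "nat \<Rightarrow> config \<Rightarrow> int \<Rightarrow> site set" where
  "spin_sites L \<eta> s = {i \<in> Lam L. \<eta> i = s}"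

definition clusters :: "nat \<Rightarrow> config \<Rightarrow> int \<Rightarrow> site set set" where
  "clusters L \<eta> s = {{j. (\<lambda>a b. a \<in> spin_sites L \<eta> s \<and> b \<in> spin_sites L \<eta> s \<and> touch a b)\<^sup>*\<^sup>* i j}
                      | i. i \<in> spin_sites L \<eta> s}"

text \<open>The cluster C has a convex side of length l: there is a row of l sites
  p, p+t, ..., p+(l-1)t of C (t a unit lattice vector, d a unit vector orthogonal
  to t pointing outward) such that the squares of the l sites p+kt+d are not in C
  (so the segment of length l between them is in the boundary), and both endpoints
  are convex corners, i.e. near each endpoint only the square of the end site of the
  row belongs to C (the three other squares meeting at that corner are not in C).\<close>
definition unit_dirs :: "site set" where
  "unit_dirs = {(1, 0), (-1, 0), (0, 1), (0, -1)}"

definition convex_side :: "site set \<Rightarrow> nat \<Rightarrow> bool" where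
  "convex_side C l \<longleftrightarrow> l \<ge> 1 \<and>
    (\<exists>p t d. t \<in> unit_dirs \<and> d \<in> unit_dirs \<and> fst t * fst d + snd t * snd d = 0 \<and>
      (let pt = (\<lambda>k::int. (fst p + k * fst t, snd p + k * snd t));
           up = (\<lambda>q::site. (fst q + fst d, snd q + snd d)) in
        (\<forall>k. 0 \<le> k \<and> k < int l \<longrightarrow> pt k \<in> C \<and> up (pt k) \<notin> C)
        \<and> pt (-1) \<notin> C \<and> up (pt (-1)) \<notin> C
        \<and> pt (int l) \<notin> C \<and> up (pt (int l)) \<notin> C))"

definition condition_C_arith :: "real \<Rightarrow> real \<Rightarrow> real \<Rightarrow> nat \<Rightarrow> bool" where
  "condition_C_arith J lam h L \<longleftrightarrow>
     real L > (2 * J / (lam - h)) ^ 3 \<and>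
     2 * J / (lam + h) \<notin> \<int> \<and> 2 * J / (lam - h) \<notin> \<int> \<and>
     (2 * J + lam - h) / (lam + h) \<notin> \<int> \<and> (J + lam + h) / h \<notin> \<int>"

end

theory Submission imports Defs begin


lemma nn_sym: "nn a b = nn b a" unfolding nn_def by (simp add: abs_minus_commute)
lemma nn_irrefl: "\<not> nn a a" unfolding nn_def by simp

lemma nbrs: "{b. nn (x,y) b} = {(x+1, y), (x - 1, y), (x, y+1), (x, y - 1)}"
proof (rule set_eqI)
  fix b :: site
  obtain u w where b: "b = (u,w)" by (cases b)
  show "b \<in> {b. nn (x,y) b} \<longleftrightarrow> b \<in> {(x+1, y), (x - 1, y), (x, y+1), (x, y - 1)}"
    unfolding b nn_def by (auto simp: abs_if split: if_splits)
qed

lemma nbr_sum: "(\<Sum>b\<in>{b. nn (x,y) b}. f b) = f (x+1, y) + f (x - 1, y) + f (x, y+1) + f (x, y - 1)"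
  unfolding nbrs by (simp add: algebra_simps)

lemma nbr4:
  assumes "t \<in> unit_dirs" "d \<in> unit_dirs" "fst t * fst d + snd t * snd d = 0"
  shows "(\<Sum>b\<in>{b. nn q b}. f b) = f (fst q + fst t, snd q + snd t) + f (fst q - fst t, snd q - snd t)
        + f (fst q + fst d, snd q + snd d) + f (fst q - fst d, snd q - snd d)"
proof -
  obtain x y where q: "q = (x,y)" by (cases q)
  show ?thesis using assms unfolding q unit_dirs_def by (auto simp: nbr_sum algebra_simps)
qed



lemma finite_Lam: "finite (Lam L)" unfolding Lam_def by simp

lemma finite_nn: "finite {b. nn q b}"
proof - obtain x y where "q = (x,y)" by (cases q) then show ?thesis by (simp add: nbrs) qed

lemma arith4:
  fixes B' B N D' D No S' S q Ls' Ls r J lam h :: real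
  assumes "B' - B = 2 * N" "D' - D = No" "S' - S = q" "Ls' - Ls = r"
  shows "(J/2*B' + J*D' - lam*S' - h*Ls') - (J/2*B + J*D - lam*S - h*Ls) = J*(N+No) - lam*q - h*r"
proof -
  have "B' = B + 2*N" "D' = D + No" "S' = S + q" "Ls' = Ls + r" using assms by auto
  then show ?thesis by (simp add: algebra_simps)
qed

lemma ham_update:
  fixes \<eta> :: config
  assumes iL: "i \<in> Lam L" and out: "\<forall>x. x \<notin> Lam L \<longrightarrow> \<eta> x = 0"
  shows "Ham J lam h L (\<eta>(i:=v)) - Ham J lam h L \<eta> =
     J * (\<Sum>b\<in>{b. nn i b}. (real_of_int (v - \<eta> b))\<^sup>2 - (real_of_int (\<eta> i - \<eta> b))\<^sup>2)
     - lam * ((real_of_int v)\<^sup>2 - (real_of_int (\<eta> i))\<^sup>2) - h * (real_of_int v - real_of_int (\<eta> i))"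
proof -
  define \<eta>' where "\<eta>' = \<eta>(i:=v)"
  define P where "P = {(a, b). a \<in> Lam L \<and> b \<in> Lam L \<and> nn a b}"
  define Nin where "Nin = {b \<in> Lam L. nn i b}"
  define Nout where "Nout = {b. b \<notin> Lam L \<and> nn i b}"
  define T where "T = (\<lambda>b. (real_of_int (v - \<eta> b))\<^sup>2 - (real_of_int (\<eta> i - \<eta> b))\<^sup>2)"
  define D where "D = (\<lambda>(a,b). (real_of_int (\<eta>' a - \<eta>' b))\<^sup>2 - (real_of_int (\<eta> a - \<eta> b))\<^sup>2)"
  have fP: "finite P" unfolding P_def
    by (rule finite_subset[of _ "Lam L \<times> Lam L"]) (auto simp: finite_Lam)
  have fNin: "finite Nin" unfolding Nin_def by (rule finite_subset[OF _ finite_nn]) auto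
  have fNout: "finite Nout" unfolding Nout_def by (rule finite_subset[OF _ finite_nn]) auto
  have bulk: "(\<Sum>(a,b)\<in>P. (real_of_int (\<eta>' a - \<eta>' b))\<^sup>2) - (\<Sum>(a,b)\<in>P. (real_of_int (\<eta> a - \<eta> b))\<^sup>2)
      = 2 * (\<Sum>b\<in>Nin. T b)"
  proof -
    have "(\<Sum>(a,b)\<in>P. (real_of_int (\<eta>' a - \<eta>' b))\<^sup>2) - (\<Sum>(a,b)\<in>P. (real_of_int (\<eta> a - \<eta> b))\<^sup>2)
        = sum D P" unfolding D_def by (simp add: sum_subtractf case_prod_unfold)
    also have "\<dots> = sum D (Pair i ` Nin \<union> (\<lambda>a. (a,i)) ` Nin)"
    proof (rule sum.mono_neutral_right[OF fP])
      show "Pair i ` Nin \<union> (\<lambda>a. (a, i)) ` Nin \<subseteq> P"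
        unfolding Nin_def P_def using iL by (auto simp: nn_sym)
      show "\<forall>x\<in>P - (Pair i ` Nin \<union> (\<lambda>a. (a, i)) ` Nin). D x = 0"
      proof
        fix x assume x: "x \<in> P - (Pair i ` Nin \<union> (\<lambda>a. (a, i)) ` Nin)"
        obtain a b where ab: "x = (a,b)" by (cases x)
        have "a \<noteq> i" "b \<noteq> i" using x unfolding ab P_def Nin_def by (auto simp: nn_sym)
        then show "D x = 0" unfolding ab D_def \<eta>'_def by simp
      qed
    qed
    also have "\<dots> = sum D (Pair i ` Nin) + sum D ((\<lambda>a. (a,i)) ` Nin)"
      by (rule sum.union_disjoint) (use fNin in \<open>auto simp: Nin_def nn_irrefl\<close>)
    also have "\<dots> = (\<Sum>b\<in>Nin. D (i,b)) + (\<Sum>b\<in>Nin. D (b,i))"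
      by (simp add: sum.reindex inj_on_def)
    also have "\<dots> = (\<Sum>b\<in>Nin. T b) + (\<Sum>b\<in>Nin. T b)"
    proof -
      have "\<And>b. b \<in> Nin \<Longrightarrow> D (i,b) = T b \<and> D (b,i) = T b"
      proof -
        fix b assume "b \<in> Nin"
        then have "b \<noteq> i" using nn_irrefl[of i] unfolding Nin_def by auto
        then show "D (i,b) = T b \<and> D (b,i) = T b" unfolding D_def T_def \<eta>'_def
          by (simp add: power2_commute)
      qed
      then show ?thesis by simp
    qed
    finally show ?thesis by simp
  qed
  have bd: "(\<Sum>a\<in>inner_boundary L. \<Sum>b\<in>{b. b \<notin> Lam L \<and> nn a b}. (real_of_int (\<eta>' a))\<^sup>2)
      - (\<Sum>a\<in>inner_boundary L. \<Sum>b\<in>{b. b \<notin> Lam L \<and> nn a b}. (real_of_int (\<eta> a))\<^sup>2)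
      = (\<Sum>b\<in>Nout. T b)"
  proof -
    have fIB: "finite (inner_boundary L)" unfolding inner_boundary_def
      by (rule finite_subset[OF _ finite_Lam]) auto
    have "(\<Sum>a\<in>inner_boundary L. \<Sum>b\<in>{b. b \<notin> Lam L \<and> nn a b}. (real_of_int (\<eta>' a))\<^sup>2)
      - (\<Sum>a\<in>inner_boundary L. \<Sum>b\<in>{b. b \<notin> Lam L \<and> nn a b}. (real_of_int (\<eta> a))\<^sup>2)
      = (\<Sum>a\<in>inner_boundary L. (if a = i then (\<Sum>b\<in>Nout. T b) else 0))"
      unfolding sum_subtractf[symmetric]
    proof (rule sum.cong[OF refl])
      fix a assume "a \<in> inner_boundary L"
      show "(\<Sum>b\<in>{b. b \<notin> Lam L \<and> nn a b}. (real_of_int (\<eta>' a))\<^sup>2 -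
          (real_of_int (\<eta> a))\<^sup>2) =
          (if a = i then sum T Nout else 0)"
      proof (cases "a = i")
        case True
        have "\<And>b. b \<in> Nout \<Longrightarrow> T b = (real_of_int v)\<^sup>2 - (real_of_int (\<eta> i))\<^sup>2"
          using out unfolding Nout_def T_def by auto
        then have "sum T Nout = (\<Sum>b\<in>Nout. (real_of_int v)\<^sup>2 - (real_of_int (\<eta> i))\<^sup>2)"
          by (rule sum.cong[OF refl])
        moreover have "card {b. b \<notin> Lam L \<and> nn i b} = card Nout" by (simp add: Nout_def)
        ultimately show ?thesis using True unfolding \<eta>'_def
          by (simp add: algebra_simps)
      next
        case False then show ?thesis unfolding \<eta>'_def by simp
      qed
    qed
    also have "\<dots> = (\<Sum>b\<in>Nout. T b)"
    proof (cases "i \<in> inner_boundary L")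
      case True then show ?thesis using fIB by (simp add: sum.delta)
    next
      case False
      then have "Nout = {}" using iL unfolding Nout_def inner_boundary_def by auto
      then have z: "sum T Nout = 0" by (simp only: sum.empty) show ?thesis unfolding z by simp
    qed
    finally show ?thesis .
  qed
  have sq: "(\<Sum>a\<in>Lam L. (real_of_int (\<eta>' a))\<^sup>2) - (\<Sum>a\<in>Lam L. (real_of_int (\<eta> a))\<^sup>2)
     = (real_of_int v)\<^sup>2 - (real_of_int (\<eta> i))\<^sup>2"
  proof -
    have "(\<Sum>a\<in>Lam L. (real_of_int (\<eta>' a))\<^sup>2) - (\<Sum>a\<in>Lam L. (real_of_int (\<eta> a))\<^sup>2)
       = (\<Sum>a\<in>Lam L. if a = i then (real_of_int v)\<^sup>2 - (real_of_int (\<eta> i))\<^sup>2 else 0)"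
      unfolding sum_subtractf[symmetric] by (rule sum.cong) (auto simp: \<eta>'_def)
    then show ?thesis using iL finite_Lam by (simp add: sum.delta)
  qed
  have lin: "(\<Sum>a\<in>Lam L. real_of_int (\<eta>' a)) - (\<Sum>a\<in>Lam L. real_of_int (\<eta> a))
     = real_of_int v - real_of_int (\<eta> i)"
  proof -
    have "(\<Sum>a\<in>Lam L. real_of_int (\<eta>' a)) - (\<Sum>a\<in>Lam L. real_of_int (\<eta> a))
       = (\<Sum>a\<in>Lam L. if a = i then real_of_int v - real_of_int (\<eta> i) else 0)"
      unfolding sum_subtractf[symmetric] by (rule sum.cong) (auto simp: \<eta>'_def)
    then show ?thesis using iL finite_Lam by (simp add: sum.delta)
  qed
  have split: "(\<Sum>b\<in>{b. nn i b}. T b) = (\<Sum>b\<in>Nin. T b) + (\<Sum>b\<in>Nout. T b)"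
  proof -
    have e: "{b. nn i b} = Nin \<union> Nout" unfolding Nin_def Nout_def by blast
    show ?thesis unfolding e by (rule sum.union_disjoint[OF fNin fNout]) (auto simp: Nin_def Nout_def)
  qed
  show ?thesis
    unfolding \<eta>'_def[symmetric] T_def[symmetric] split
    unfolding Ham_def P_def[symmetric]
    by (rule arith4[OF bulk bd sq lin])
qed



lemma cluster_sub:
  assumes "C \<in> clusters L \<eta> s" shows "C \<subseteq> spin_sites L \<eta> s"
proof
  fix x assume x: "x \<in> C"
  from assms obtain i where i: "i \<in> spin_sites L \<eta> s"
    and Ci: "C = {j. (\<lambda>a b. a \<in> spin_sites L \<eta> s \<and> b \<in> spin_sites L \<eta> s \<and> touch a b)\<^sup>*\<^sup>* i j}"
    unfolding clusters_def by blast
  from x Ci have "(\<lambda>a b. a \<in> spin_sites L \<eta> s \<and> b \<in> spin_sites L \<eta> s \<and> touch a b)\<^sup>*\<^sup>* i x" by blast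
  then show "x \<in> spin_sites L \<eta> s" using i by (cases rule: rtranclp.cases) auto
qed

lemma cluster_closed:
  assumes C: "C \<in> clusters L \<eta> s" and a: "a \<in> C" and b: "b \<in> spin_sites L \<eta> s" and t: "touch a b"
  shows "b \<in> C"
proof -
  from C obtain i where i: "i \<in> spin_sites L \<eta> s"
    and Ci: "C = {j. (\<lambda>a b. a \<in> spin_sites L \<eta> s \<and> b \<in> spin_sites L \<eta> s \<and> touch a b)\<^sup>*\<^sup>* i j}"
    unfolding clusters_def by blast
  have as: "a \<in> spin_sites L \<eta> s" using cluster_sub[OF C] a by blast
  from a Ci have "(\<lambda>a b. a \<in> spin_sites L \<eta> s \<and> b \<in> spin_sites L \<eta> s \<and> touch a b)\<^sup>*\<^sup>* i a" by blast
  then have "(\<lambda>a b. a \<in> spin_sites L \<eta> s \<and> b \<in> spin_sites L \<eta> s \<and> touch a b)\<^sup>*\<^sup>* i b"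
    using as b t by (simp add: rtranclp.rtrancl_into_rtrancl)
  then show ?thesis using Ci by blast
qed

lemma not_s:
  assumes C: "C \<in> clusters L \<eta> s" and X: "\<eta> \<in> Xsp L" and s: "s \<noteq> 0"
    and a: "a \<in> C" and x: "x \<notin> C" and t: "touch a x"
  shows "\<eta> x \<noteq> s"
proof
  assume e: "\<eta> x = s"
  show False
  proof (cases "x \<in> Lam L")
    case True
    then have "x \<in> spin_sites L \<eta> s" using e unfolding spin_sites_def by simp
    then show False using cluster_closed[OF C a _ t] x by blast
  next
    case False
    then have "\<eta> x = 0" using X unfolding Xsp_def by blast
    then show False using e s by simp
  qed
qed

lemma touch_t:
  assumes "t \<in> unit_dirs"
  shows "touch q (fst q + fst t, snd q + snd t)" "touch q (fst q - fst t, snd q - snd t)"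
  using assms unfolding unit_dirs_def touch_def by (auto simp: prod_eq_iff)

definition F :: "int \<Rightarrow> int \<Rightarrow> real" where
  "F s x = (real_of_int (0 - x))\<^sup>2 - (real_of_int (s - x))\<^sup>2"

lemma F_le1: "s = 1 \<or> s = -1 \<Longrightarrow> x \<in> {-1,0,1} \<Longrightarrow> F s x \<le> 1"
  unfolding F_def by auto
lemma F_ne: "s = 1 \<or> s = -1 \<Longrightarrow> x \<in> {-1,0,1} \<Longrightarrow> x \<noteq> s \<Longrightarrow> F s x \<le> -1"
  unfolding F_def by auto



lemma core:
  fixes \<eta> :: config and s :: int and c J lam h :: real
  assumes J: "J > 0" and X: "\<eta> \<in> Xsp L" and s: "s = 1 \<or> s = -1" and C: "C \<in> clusters L \<eta> s"
    and cs: "convex_side C l" and c: "c = lam + h * real_of_int s" "c > 0" and lc: "real l * c < 2*J"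
  shows "Vstab J lam h L \<eta> < 2*J"
proof -
  have l1: "l \<ge> 1" using cs unfolding convex_side_def by simp
  obtain p t d where t: "t \<in> unit_dirs" and d: "d \<in> unit_dirs" and orth: "fst t * fst d + snd t * snd d = 0"
    and rest: "(let pt = (\<lambda>k::int. (fst p + k * fst t, snd p + k * snd t));
           up = (\<lambda>q::site. (fst q + fst d, snd q + snd d)) in
        (\<forall>k. 0 \<le> k \<and> k < int l \<longrightarrow> pt k \<in> C \<and> up (pt k) \<notin> C)
        \<and> pt (-1) \<notin> C \<and> up (pt (-1)) \<notin> C
        \<and> pt (int l) \<notin> C \<and> up (pt (int l)) \<notin> C)"
    using cs unfolding convex_side_def by blast
  define pt where "pt = (\<lambda>k::int. (fst p + k * fst t, snd p + k * snd t))"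
  define up where "up = (\<lambda>q::site. (fst q + fst d, snd q + snd d))"
  have row: "\<And>k. 0 \<le> k \<Longrightarrow> k < int l \<Longrightarrow> pt k \<in> C \<and> up (pt k) \<notin> C"
    and e1: "pt (-1) \<notin> C" and e2: "pt (int l) \<notin> C"
    using rest unfolding Let_def pt_def[symmetric] up_def[symmetric] by auto
  have s0: "s \<noteq> 0" using s by auto
  have outz: "\<forall>x. x \<notin> Lam L \<longrightarrow> \<eta> x = 0" using X unfolding Xsp_def by blast
  have vals: "\<And>x. \<eta> x \<in> {-1,0,1}"
  proof -
    fix x show "\<eta> x \<in> {-1,0,1}"
    proof (cases "x \<in> Lam L")
      case True then show ?thesis using X unfolding Xsp_def by blast
    next
      case False then have "\<eta> x = 0" using outz by blast
      then show ?thesis by simp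
    qed
  qed
  have CL: "\<And>x. x \<in> C \<Longrightarrow> x \<in> Lam L \<and> \<eta> x = s"
    using cluster_sub[OF C] unfolding spin_sites_def by blast
  have inj: "\<And>a b. pt a = pt b \<Longrightarrow> a = b"
    using t unfolding unit_dirs_def pt_def by auto
  have nplus: "\<And>k. (fst (pt k) + fst t, snd (pt k) + snd t) = pt (k+1)"
    unfolding pt_def by (simp add: algebra_simps)
  have nminus: "\<And>k. (fst (pt k) - fst t, snd (pt k) - snd t) = pt (k-1)"
    unfolding pt_def by (simp add: algebra_simps)
  have tplus: "\<And>k. touch (pt k) (pt (k+1))" using touch_t(1)[OF t] nplus by metis
  have tminus: "\<And>k. touch (pt k) (pt (k-1))" using touch_t(2)[OF t] nminus by metis
  have tup: "\<And>k. touch (pt k) (up (pt k))" using touch_t(1)[OF d] unfolding up_def by metis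
  define E where "E = (\<lambda>k::nat. \<lambda>x. if x \<in> pt ` {0..<int k} then 0 else \<eta> x)"
  have Evals: "\<And>k x. E k x \<in> {-1,0,1}" unfolding E_def using vals by auto
  have Eout: "\<And>k. \<forall>x. x \<notin> Lam L \<longrightarrow> E k x = 0" unfolding E_def using outz by auto
  have EX: "\<And>k. E k \<in> Xsp L" unfolding Xsp_def using Evals Eout by auto
  have E0: "E 0 = \<eta>" unfolding E_def by auto
  have Esuc: "\<And>k. E (Suc k) = (E k)(pt (int k) := 0)"
  proof -
    fix k
    have "{0..<int (Suc k)} = insert (int k) {0..<int k}" by auto
    then show "E (Suc k) = (E k)(pt (int k) := 0)" unfolding E_def by (auto simp: fun_eq_iff)
  qed
  have rowS: "\<And>k x. x \<in> pt ` {0..<int k} \<Longrightarrow> k \<le> l \<Longrightarrow> x \<in> C"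
    using row by auto
  have step: "\<And>k. k < l \<Longrightarrow> Ham J lam h L (E (Suc k)) \<le> Ham J lam h L (E k) + c - (if Suc k = l then 2*J else 0)"
  proof -
    fix k assume kl: "k < l"
    define q where "q = pt (int k)"
    have qC: "q \<in> C" using row[of "int k"] kl unfolding q_def by simp
    have qL: "q \<in> Lam L" using CL[OF qC] by simp
    have Eq: "E k q = s"
    proof -
      have "q \<notin> pt ` {0..<int k}" unfolding q_def using inj by force
      then show ?thesis unfolding E_def using CL[OF qC] by simp
    qed
    have upq: "up q \<notin> C" using row[of "int k"] kl unfolding q_def by simp
    have H: "Ham J lam h L (E (Suc k)) - Ham J lam h L (E k) =
       J * (\<Sum>b\<in>{b. nn q b}. F s (E k b)) + c"
      unfolding Esuc q_def[symmetric] ham_update[OF qL Eout] F_def Eq c(1) using s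
      by auto
    have sum4: "(\<Sum>b\<in>{b. nn q b}. F s (E k b)) = F s (E k (pt (int k + 1))) + F s (E k (pt (int k - 1)))
        + F s (E k (up q)) + F s (E k (fst q - fst d, snd q - snd d))"
      using nbr4[OF t d orth, of "\<lambda>b. F s (E k b)" q] unfolding q_def nplus nminus up_def by simp
    have b1: "F s (E k (pt (int k + 1))) \<le> (if Suc k = l then -1 else 1)"
    proof (cases "Suc k = l")
      case True
      have "pt (int k + 1) \<notin> pt ` {0..<int k}" using inj by force
      then have "E k (pt (int k + 1)) = \<eta> (pt (int l))" unfolding E_def using True by (auto simp: add.commute)
      moreover have "\<eta> (pt (int l)) \<noteq> s"
        using not_s[OF C X s0 qC e2] tplus[of "int k"] True unfolding q_def by (auto simp: add.commute)
      ultimately have "F s (E k (pt (int k + 1))) \<le> -1" using F_ne[OF s vals] by metis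
      then show ?thesis using True by simp
    next
      case False then show ?thesis using F_le1[OF s Evals] by simp
    qed
    have b2: "F s (E k (pt (int k - 1))) \<le> -1"
    proof (cases "k = 0")
      case True
      then have "E k (pt (int k - 1)) = \<eta> (pt (-1))" unfolding E_def by simp
      moreover have "\<eta> (pt (-1)) \<noteq> s"
        using not_s[OF C X s0 qC e1] tminus[of "int k"] True unfolding q_def by auto
      ultimately show ?thesis using F_ne[OF s Evals] by metis
    next
      case False
      then have "E k (pt (int k - 1)) = 0" unfolding E_def by force
      then show ?thesis using F_ne[OF s, of 0] s0 by simp
    qed
    have b3: "F s (E k (up q)) \<le> -1"
    proof -
      have "up q \<notin> pt ` {0..<int k}" using rowS[of "up q" k] upq kl by auto
      then have "E k (up q) = \<eta> (up q)" unfolding E_def by simp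
      moreover have "\<eta> (up q) \<noteq> s" using not_s[OF C X s0 qC upq] tup unfolding q_def by auto
      ultimately show ?thesis using F_ne[OF s Evals] by metis
    qed
    have b4: "F s (E k (fst q - fst d, snd q - snd d)) \<le> 1" using F_le1[OF s Evals] by simp
    have "(\<Sum>b\<in>{b. nn q b}. F s (E k b)) \<le> (if Suc k = l then -2 else 0)"
      unfolding sum4 using b1 b2 b3 b4 by (auto split: if_splits)
    then have "J * (\<Sum>b\<in>{b. nn q b}. F s (E k b)) \<le> J * (if Suc k = l then -2 else 0)"
      using J by (intro mult_left_mono) auto
    then show "Ham J lam h L (E (Suc k)) \<le> Ham J lam h L (E k) + c - (if Suc k = l then 2*J else 0)"
      using H by (auto split: if_splits)
  qed
  define H0 where "H0 = Ham J lam h L \<eta>"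
  have bound: "\<And>k. k \<le> l \<Longrightarrow> Ham J lam h L (E k) \<le> H0 + real k * c - (if k = l then 2*J else 0)"
  proof -
    fix k show "k \<le> l \<Longrightarrow> Ham J lam h L (E k) \<le> H0 + real k * c - (if k = l then 2*J else 0)"
    proof (induction k)
      case 0 then show ?case using l1 E0 unfolding H0_def by auto
    next
      case (Suc k)
      then have "Ham J lam h L (E k) \<le> H0 + real k * c" by auto
      then show ?case using step[of k] Suc.prems by (auto simp: algebra_simps split: if_splits)
    qed
  qed
  have bound2: "\<And>k. k \<le> l \<Longrightarrow> Ham J lam h L (E k) \<le> H0 + (real l - 1) * c"
  proof -
    fix k assume kl: "k \<le> l"
    have cl: "c \<le> real l * c" using l1 c(2) by simp
    show "Ham J lam h L (E k) \<le> H0 + (real l - 1) * c"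
    proof (cases "k = l")
      case True then show ?thesis using bound[OF kl] cl lc by (simp add: algebra_simps)
    next
      case False
      then have "real k \<le> real l - 1" using kl by linarith
      then have "real k * c \<le> (real l - 1) * c" using c(2) by (intro mult_right_mono) auto
      then show ?thesis using bound[OF kl] False by simp
    qed
  qed
  have lastE: "Ham J lam h L (E l) < H0" using bound[of l] lc by simp
  define \<omega> where "\<omega> = map E [0..<Suc l]"
  have setw: "set \<omega> = E ` {0..<Suc l}" unfolding \<omega>_def by (simp del: upt_Suc)
  have path: "is_path L \<omega> \<eta> {\<zeta> \<in> Xsp L. Ham J lam h L \<zeta> < Ham J lam h L \<eta>}"
    unfolding is_path_def
  proof (intro conjI allI impI)
    show "\<omega> \<noteq> []" unfolding \<omega>_def by simp
    show "hd \<omega> = \<eta>" unfolding \<omega>_def using E0 by (simp add: hd_map upt_conv_Cons del: upt_Suc)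
    show "last \<omega> \<in> {\<zeta> \<in> Xsp L. Ham J lam h L \<zeta> < Ham J lam h L \<eta>}"
      unfolding \<omega>_def using lastE EX unfolding H0_def by (simp add: last_map)
    show "set \<omega> \<subseteq> Xsp L" unfolding setw using EX by auto
    fix k assume k: "Suc k < length \<omega>"
    then have "\<omega> ! k = E k" "\<omega> ! Suc k = E (Suc k)" unfolding \<omega>_def by (auto simp del: upt_Suc)
    then show "single_site (\<omega> ! k) (\<omega> ! Suc k)" unfolding single_site_def Esuc
      by (intro exI[of _ "pt (int k)"]) simp
  qed
  have fin: "finite (Ham J lam h L ` set \<omega>)" by simp
  have ne: "Ham J lam h L ` set \<omega> \<noteq> {}" unfolding \<omega>_def by simp
  have maxb: "Max (Ham J lam h L ` set \<omega>) \<le> H0 + (real l - 1) * c"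
    using fin ne bound2 unfolding setw by (auto simp: Max_le_iff)
  define S where "S = {Max (Ham J lam h L ` set \<omega>') | \<omega>'. is_path L \<omega>' \<eta> {\<zeta> \<in> Xsp L. Ham J lam h L \<zeta> < Ham J lam h L \<eta>}}"
  have inS: "Max (Ham J lam h L ` set \<omega>) \<in> S" unfolding S_def using path by blast
  have bdd: "bdd_below S"
  proof (rule bdd_belowI[of _ H0])
    fix y assume "y \<in> S"
    then obtain \<omega>' where y: "y = Max (Ham J lam h L ` set \<omega>')"
      and pw: "is_path L \<omega>' \<eta> {\<zeta> \<in> Xsp L. Ham J lam h L \<zeta> < Ham J lam h L \<eta>}"
      unfolding S_def by blast
    have "\<eta> \<in> set \<omega>'" using pw unfolding is_path_def by (metis hd_in_set)
    then show "H0 \<le> y" unfolding y H0_def by (simp add: Max_ge)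
  qed
  have "Phi J lam h L \<eta> {\<zeta> \<in> Xsp L. Ham J lam h L \<zeta> < Ham J lam h L \<eta>} \<le> H0 + (real l - 1) * c"
    unfolding Phi_def S_def[symmetric] using cInf_lower[OF inS bdd] maxb by linarith
  then have "Vstab J lam h L \<eta> \<le> (real l - 1) * c" unfolding Vstab_def H0_def by simp
  also have "\<dots> < 2 * J" using lc c(2) by (simp add: algebra_simps)
  finally show ?thesis .
qed

theorem lemma4p3:
  fixes lam h :: real
  assumes "0 < h" and "lam / 2 < h" and "h < lam"
  shows "\<exists>J0. \<forall>J L \<eta>. J > J0 \<and> condition_C_arith J lam h L \<and> \<eta> \<in> Xsp L \<and>
           ((\<exists>C \<in> clusters L \<eta> 1. \<exists>l1. convex_side C l1 \<and> real l1 < 2 * J / (lam + h)) \<or>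
            (\<exists>C \<in> clusters L \<eta> (-1). \<exists>l2. convex_side C l2 \<and> real l2 < 2 * J / (lam - h)))
           \<longrightarrow> Vstab J lam h L \<eta> < 2 * J"
proof (intro exI[of _ 0] allI impI)
  fix J L \<eta>
  assume H: "J > 0 \<and> condition_C_arith J lam h L \<and> \<eta> \<in> Xsp L \<and>
           ((\<exists>C \<in> clusters L \<eta> 1. \<exists>l1. convex_side C l1 \<and> real l1 < 2 * J / (lam + h)) \<or>
            (\<exists>C \<in> clusters L \<eta> (-1). \<exists>l2. convex_side C l2 \<and> real l2 < 2 * J / (lam - h)))"
  then have J: "J > 0" and X: "\<eta> \<in> Xsp L" by auto
  have p1: "lam + h > 0" and p2: "lam - h > 0" using assms by auto
  from H consider (a) C l1 where "C \<in> clusters L \<eta> 1" "convex_side C l1" "real l1 < 2 * J / (lam + h)"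
    | (b) C l2 where "C \<in> clusters L \<eta> (-1)" "convex_side C l2" "real l2 < 2 * J / (lam - h)"
    by blast
  then show "Vstab J lam h L \<eta> < 2 * J"
  proof cases
    case a
    have "real l1 * (lam + h) < 2 * J" using a(3) p1 by (simp add: pos_less_divide_eq)
    then show ?thesis using core[OF J X _ a(1) a(2), of "lam + h"] p1 by simp
  next
    case b
    have "real l2 * (lam - h) < 2 * J" using b(3) p2 by (simp add: pos_less_divide_eq)
    then show ?thesis using core[OF J X _ b(1) b(2), of "lam - h"] p2 by simp
  qed
qed

end
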